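(* For all integers $n\ge k\ge 2$ and $r\ge 0$, \[ \mathsf{opt}_{\operatorname{bandit}}^{\operatorname{det}}(n,k,r)\ge k(r+1)-1. \]
   Context: Prediction with expert advice: $\mathcal{Y}=\{1,\dots,k\}$, $\mathcal{X}=[k]^n$, experts $h_i(x)=x_i$, $i=1,\dots,n$. $\mathcal{P}_r$ is the set of finite sequences of examples in $\mathcal{X}\times\mathcal{Y}$ on which some $h_i$ errs on at most $r$ examples. Bandit feedback: each round the adversary presents $x_t$, a deterministic learner predicts $\hat y_t$ as a function of past observations and $x_t$, and learns only whether $\hat y_t$ equals the true label $y_t$. $\mathsf{opt}_{\operatorname{bandit}}^{\operatorname{det}}(n,k,r)$ is the infimum over deterministic learners of the supremum over $S\in\mathcal{P}_r$ of the number of mistakes ($\hat y_t\ne y_t$). *)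

theory Defs
  imports Main "HOL-Library.Extended_Nat"
begin

(* Instances x in [k]^n are lists of length n with entries in {1..k};
   expert i (for i < n) predicts x ! i. Labels are in {1..k}. *)
type_synonym inst = "nat list"
type_synonym example = "inst \<times> nat"

(* A history entry records the inst, the learner's prediction, and the
   bandit feedback bit (whether the prediction was correct). *)
type_synonym history = "(inst \<times> nat \<times> bool) list"

type_synonym learner = "history \<Rightarrow> inst \<Rightarrow> nat"

definition valid_learner :: "nat \<Rightarrow> learner \<Rightarrow> bool" where
  "valid_learner k L \<longleftrightarrow> (\<forall>h x. L h x \<in> {1..k})"

fun run_mistakes :: "learner \<Rightarrow> history \<Rightarrow> example list \<Rightarrow> nat" where
  "run_mistakes L h [] = 0"
| "run_mistakes L h ((x, y) # S) =
     (let p = L h x in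
       (if p \<noteq> y then 1 else 0) + run_mistakes L (h @ [(x, p, p = y)]) S)"

definition mistakes :: "learner \<Rightarrow> example list \<Rightarrow> nat" where
  "mistakes L S = run_mistakes L [] S"

definition valid_example :: "nat \<Rightarrow> nat \<Rightarrow> example \<Rightarrow> bool" where
  "valid_example n k e \<longleftrightarrow>
     length (fst e) = n \<and> set (fst e) \<subseteq> {1..k} \<and> snd e \<in> {1..k}"

definition expert_errors :: "nat \<Rightarrow> example list \<Rightarrow> nat" where
  "expert_errors i S = length (filter (\<lambda>(x, y). x ! i \<noteq> y) S)"

definition P_r :: "nat \<Rightarrow> nat \<Rightarrow> nat \<Rightarrow> example list set" where
  "P_r n k r = {S. (\<forall>e\<in>set S. valid_example n k e) \<and>
                   (\<exists>i<n. expert_errors i S \<le> r)}"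

definition opt_bandit_det :: "nat \<Rightarrow> nat \<Rightarrow> nat \<Rightarrow> enat" where
  "opt_bandit_det n k r =
     (INF L \<in> {L. valid_learner k L}. SUP S \<in> P_r n k r. enat (mistakes L S))"

end

theory Submission
  imports Defs
begin

fun hs :: "learner \<Rightarrow> inst \<Rightarrow> nat \<Rightarrow> history" where
  "hs L x 0 = []"
| "hs L x (Suc t) = hs L x t @ [(x, L (hs L x t) x, False)]"

lemma run_all_wrong:
  assumes "\<And>t. y t \<noteq> L (hs L x t) x"
  shows "run_mistakes L (hs L x m) (map (\<lambda>t. (x, y t)) [m..<m+j]) = j"
  using assms
proof (induction j arbitrary: m)
  case 0 then show ?case by simp
next
  case (Suc j)
  have e: "[m..<m + Suc j] = m # [Suc m..<Suc m + j]" by (simp add: upt_conv_Cons)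
  have "run_mistakes L (hs L x (Suc m)) (map (\<lambda>t. (x, y t)) [Suc m..<Suc m+j]) = j"
    using Suc by blast
  then show ?case using Suc.prems[of m] unfolding e by (simp add: Let_def del: upt_Suc)
qed

theorem lemma4p6:
  fixes n k r :: nat
  assumes "2 \<le> k" and "k \<le> n"
  shows "enat (k * (r + 1) - 1) \<le> opt_bandit_det n k r"
  unfolding opt_bandit_det_def
proof (rule INF_greatest)
  fix L assume "L \<in> {L. valid_learner k L}"
  then have vl: "\<And>h x. L h x \<in> {1..k}" by (simp add: valid_learner_def)
  define T where "T = k * (r + 1) - 1"
  define x where "x = map (\<lambda>i. if i < k then i+1 else 1) [0..<n]"
  define p where "p = (\<lambda>t. L (hs L x t) x)"
  have "\<exists>v\<in>{1..k}. card {t\<in>{..<T}. p t = v} \<le> r"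
  proof (rule ccontr)
    assume "\<not> ?thesis"
    then have big: "\<And>v. v \<in> {1..k} \<Longrightarrow> r + 1 \<le> card {t\<in>{..<T}. p t = v}" by force
    have "{..<T} = (\<Union>v\<in>{1..k}. {t\<in>{..<T}. p t = v})"
      using vl unfolding p_def by auto
    moreover have "card (\<Union>v\<in>{1..k}. {t\<in>{..<T}. p t = v}) = (\<Sum>v\<in>{1..k}. card {t\<in>{..<T}. p t = v})"
      by (rule card_UN_disjoint) auto
    ultimately have "card {..<T} = (\<Sum>v\<in>{1..k}. card {t\<in>{..<T}. p t = v})"
      by (simp only:)
    also have "\<dots> \<ge> (\<Sum>v\<in>{1..k}. r + 1)" by (rule sum_mono) (rule big)
    finally have "k * (r+1) \<le> T" by simp
    then show False unfolding T_def using assms by (simp add: algebra_simps)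
  qed
  then obtain v where v: "v \<in> {1..k}" and cv: "card {t\<in>{..<T}. p t = v} \<le> r" by blast
  define w where "w = (if v = 1 then 2 else (1::nat))"
  define y where "y = (\<lambda>t. if p t \<noteq> v then v else w)"
  define S where "S = map (\<lambda>t. (x, y t)) [0..<T]"
  have yne: "\<And>t. y t \<noteq> L (hs L x t) x" unfolding y_def w_def p_def by auto
  have mis: "mistakes L S = T"
    unfolding mistakes_def S_def using run_all_wrong[of y L x 0 T, OF yne] by simp
  have xv: "x ! (v - 1) = v" using v assms unfolding x_def by auto
  have lx: "length x = n" "set x \<subseteq> {1..k}" unfolding x_def using assms by auto
  have key: "\<And>t. (x!(v-1) \<noteq> y t) = (p t = v)" unfolding xv y_def w_def by auto
  have "expert_errors (v - 1) S = length (filter (\<lambda>t. p t = v) [0..<T])"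
    unfolding expert_errors_def S_def filter_map o_def length_map
    by (rule arg_cong[where f=length], rule filter_cong) (simp_all add: key[simplified])
  also have "\<dots> = card {t\<in>{..<T}. p t = v}"
    by (subst distinct_length_filter) (auto intro: arg_cong[where f=card])
  finally have ee: "expert_errors (v - 1) S \<le> r" using cv by simp
  have "S \<in> P_r n k r"
    unfolding P_r_def
  proof (intro CollectI conjI ballI)
    fix e assume "e \<in> set S"
    then show "valid_example n k e" using lx v assms
      unfolding S_def valid_example_def y_def w_def by auto
  next
    show "\<exists>i<n. expert_errors i S \<le> r" using ee v assms by (intro exI[of _ "v-1"]) auto
  qed
  then show "enat (k * (r + 1) - 1) \<le> (SUP S\<in>P_r n k r. enat (mistakes L S))"
    using mis T_def by (metis SUP_upper)
qed

end
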